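(* Let $N\in\mathbb{N}$, let $\mathcal{T}$ be an $N$-regular rooted tree, let $\mathcal{S}\subset\mathcal{T}$ be a subtree, and let $1\le m\le N$ be an integer. Suppose that for every $m$-regular subtree $\mathcal{R}$ of $\mathcal{T}$, the set $\mathcal{S}\cap\mathcal{R}$ is infinite. Then $\mathcal{S}$ has an $(N-m+1)$-regular subtree.
   Context: A rooted tree is a connected graph without cycles with a distinguished vertex (the root), identified with its vertex set. The height of a vertex is the length of the unique path from the root to it. A successor of a vertex $\tau'$ is a vertex adjacent to $\tau'$ of height one greater. A subtree of $\mathcal{T}$ means a subset of vertices that contains the root of $\mathcal{T}$ and is closed under taking predecessors (so it is a rooted tree with the same root). A rooted tree is $N$-regular if every vertex has exactly $N$ successors. *)

theory Defs
  imports Main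
begin

text \<open>The N-regular rooted tree is modelled canonically: vertices are finite words over
  the alphabet {0..<N}, the root is the empty word, and the successors of a word v
  are the words v @ [i] with i < N.\<close>

definition full_tree :: "nat \<Rightarrow> nat list set" where
  "full_tree N = {xs. \<forall>x\<in>set xs. x < N}"

definition is_subtree :: "nat list set \<Rightarrow> nat list set \<Rightarrow> bool" where
  "is_subtree S T \<longleftrightarrow> S \<subseteq> T \<and> [] \<in> S \<and> (\<forall>xs\<in>S. butlast xs \<in> S)"

definition successors :: "nat list set \<Rightarrow> nat list \<Rightarrow> nat list set" where
  "successors R v = {w \<in> R. \<exists>i. w = v @ [i]}"

definition regular :: "nat \<Rightarrow> nat list set \<Rightarrow> bool" where
  "regular k R \<longleftrightarrow> (\<forall>v\<in>R. finite (successors R v) \<and> card (successors R v) = k)"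

end

theory Submission
  imports Defs
begin

inductive_set T :: "(nat list \<Rightarrow> nat set) \<Rightarrow> nat list set" for c where
  Nil: "[] \<in> T c"
| snoc: "xs \<in> T c \<Longrightarrow> i \<in> c xs \<Longrightarrow> xs @ [i] \<in> T c"

lemma T_snoc: "xs @ [i] \<in> T c \<longleftrightarrow> xs \<in> T c \<and> i \<in> c xs"
  by (auto elim: T.cases intro: T.intros)

lemma T_butlast: "xs \<in> T c \<Longrightarrow> butlast xs \<in> T c"
  by (cases xs rule: rev_cases) (auto simp: T_snoc)

lemma T_succ: "v \<in> T c \<Longrightarrow> successors (T c) v = (\<lambda>i. v @ [i]) ` c v"
  by (auto simp: successors_def T_snoc)

lemma T_regular:
  assumes "\<forall>v\<in>T c. finite (c v) \<and> card (c v) = k"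
  shows "regular k (T c)"
  unfolding regular_def
proof
  fix v assume v: "v \<in> T c"
  have inj: "inj_on (\<lambda>i. v @ [i]) (c v)" by (auto intro: inj_onI)
  show "finite (successors (T c) v) \<and> card (successors (T c) v) = k"
    using assms v T_succ[OF v] card_image[OF inj] by auto
qed

lemma T_full: "(\<forall>v. c v \<subseteq> {..<N}) \<Longrightarrow> T c \<subseteq> full_tree N"
proof
  fix xs assume h: "\<forall>v. c v \<subseteq> {..<N}" and x: "xs \<in> T c"
  from x show "xs \<in> full_tree N"
    by (induction rule: T.induct) (use h in \<open>auto simp: full_tree_def\<close>)
qed

fun Bs :: "nat list set \<Rightarrow> nat \<Rightarrow> nat \<Rightarrow> nat \<Rightarrow> nat list set" where
  "Bs S N m 0 = - S"
| "Bs S N m (Suc n) = Bs S N m n \<union> {v. m \<le> card {i. i < N \<and> v @ [i] \<in> Bs S N m n}}"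

lemma Bs_mono: "n \<le> n' \<Longrightarrow> Bs S N m n \<subseteq> Bs S N m n'"
  by (rule lift_Suc_mono_le[of "Bs S N m"]) auto

lemma bad_case:
  assumes sub: "is_subtree S (full_tree N)" and mN: "m \<le> N" and r: "[] \<in> Bs S N m r"
  shows "\<exists>R. is_subtree R (full_tree N) \<and> regular m R \<and> finite (S \<inter> R)"
proof -
  define rk where "rk v = (LEAST n. v \<in> Bs S N m n)" for v
  define c where "c v = (if v \<in> S \<and> (\<exists>n. v \<in> Bs S N m n) then
      (SOME C. C \<subseteq> {i. i < N \<and> v @ [i] \<in> Bs S N m (rk v - 1)} \<and> card C = m) else {..<m})" for v
  have cprop: "c v \<subseteq> {..<N} \<and> card (c v) = m \<and>
      (v \<in> S \<and> (\<exists>n. v \<in> Bs S N m n) \<longrightarrow> c v \<subseteq> {i. v @ [i] \<in> Bs S N m (rk v - 1)})" for v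
  proof (cases "v \<in> S \<and> (\<exists>n. v \<in> Bs S N m n)")
    case True
    then obtain n where vS: "v \<in> S" and vn: "v \<in> Bs S N m n" by blast
    from vn have inr: "v \<in> Bs S N m (rk v)" unfolding rk_def by (rule LeastI)
    have "rk v \<noteq> 0" using inr vS by (cases "rk v") auto
    then obtain p where p: "rk v = Suc p" by (cases "rk v") auto
    have "v \<notin> Bs S N m p" unfolding rk_def
      by (rule not_less_Least) (use p in \<open>simp add: rk_def\<close>)
    with inr p have "m \<le> card {i. i < N \<and> v @ [i] \<in> Bs S N m p}" by auto
    then obtain C where "C \<subseteq> {i. i < N \<and> v @ [i] \<in> Bs S N m p}" "card C = m"
      by (rule obtain_subset_with_card_n)
    then have ex: "\<exists>C. C \<subseteq> {i. i < N \<and> v @ [i] \<in> Bs S N m (rk v - 1)} \<and> card C = m"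
      using p by auto
    have "c v \<subseteq> {i. i < N \<and> v @ [i] \<in> Bs S N m (rk v - 1)} \<and> card (c v) = m"
      unfolding c_def using True someI_ex[OF ex] by simp
    then show ?thesis by auto
  next
    case False
    then show ?thesis unfolding c_def using mN by auto
  qed
  have inv: "xs \<in> S \<Longrightarrow> (\<exists>n. xs \<in> Bs S N m n) \<and> rk xs + length xs \<le> rk []"
    if "xs \<in> T c" for xs
    using that
  proof (induction rule: T.induct)
    case Nil
    then show ?case using r by auto
  next
    case (snoc xs i)
    have "xs = butlast (xs @ [i])" by simp
    then have xsS: "xs \<in> S" using sub snoc.prems unfolding is_subtree_def by metis
    with snoc.IH obtain n where n: "xs \<in> Bs S N m n" and le: "rk xs + length xs \<le> rk []" by blast
    have inr: "xs \<in> Bs S N m (rk xs)" unfolding rk_def using n by (rule LeastI)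
    have "rk xs \<noteq> 0" using inr xsS by (cases "rk xs") auto
    have "xs @ [i] \<in> Bs S N m (rk xs - 1)" using cprop[of xs] snoc.hyps xsS n by blast
    then have "rk (xs @ [i]) \<le> rk xs - 1" unfolding rk_def by (rule Least_le)
    then show ?case using \<open>xs @ [i] \<in> Bs S N m (rk xs - 1)\<close> le \<open>rk xs \<noteq> 0\<close> by auto
  qed
  have full: "T c \<subseteq> full_tree N" by (rule T_full) (use cprop in blast)
  have "S \<inter> T c \<subseteq> {xs. set xs \<subseteq> {..<N} \<and> length xs \<le> rk []}"
    using inv full by (force simp: full_tree_def)
  then have fin: "finite (S \<inter> T c)"
    by (rule finite_subset) (rule finite_lists_length_le, simp)
  have "regular m (T c)"
    by (rule T_regular) (metis cprop card.infinite finite_lessThan finite_subset)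
  moreover have "is_subtree (T c) (full_tree N)"
    unfolding is_subtree_def using full T_butlast T.Nil by blast
  ultimately show ?thesis using fin by blast
qed

lemma good_case:
  assumes sub: "is_subtree S (full_tree N)" and m1: "1 \<le> m" and mN: "m \<le> N"
    and nb: "\<forall>n. [] \<notin> Bs S N m n"
  shows "\<exists>R'. is_subtree R' S \<and> regular (N - m + 1) R'"
proof -
  define G where "G = {v. \<forall>n. v \<notin> Bs S N m n}"
  have GS: "G \<subseteq> S" unfolding G_def by (auto dest: spec[of _ 0])
  have key: "N - m + 1 \<le> card {i. i < N \<and> v @ [i] \<in> G}" if vG: "v \<in> G" for v
  proof -
    define U where "U = {i. i < N \<and> (\<exists>n. v @ [i] \<in> Bs S N m n)}"
    define f where "f i = (LEAST n. v @ [i] \<in> Bs S N m n)" for i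
    have finU: "finite U" unfolding U_def by auto
    define n0 where "n0 = Max (insert 0 (f ` U))"
    have "U \<subseteq> {i. i < N \<and> v @ [i] \<in> Bs S N m n0}"
    proof
      fix i assume iU: "i \<in> U"
      then have "v @ [i] \<in> Bs S N m (f i)" unfolding U_def f_def by (auto intro: LeastI)
      moreover have "f i \<le> n0" unfolding n0_def using finU iU by auto
      ultimately show "i \<in> {i. i < N \<and> v @ [i] \<in> Bs S N m n0}"
        using Bs_mono iU unfolding U_def by blast
    qed
    moreover have "v \<notin> Bs S N m (Suc n0)" using vG unfolding G_def by blast
    then have "card {i. i < N \<and> v @ [i] \<in> Bs S N m n0} < m" by auto
    ultimately have cU: "card U < m"
      by (metis (no_types, lifting) card_mono finite_nat_set_iff_bounded le_less_trans mem_Collect_eq)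
    have eq: "{i. i < N \<and> v @ [i] \<in> G} = {..<N} - U" unfolding U_def G_def by auto
    have "card ({..<N} - U) = N - card U"
      by (subst card_Diff_subset) (auto simp: finU U_def)
    then show ?thesis using eq cU m1 mN by simp
  qed
  define c where "c v = (SOME C. C \<subseteq> {i. i < N \<and> v @ [i] \<in> G} \<and> card C = N - m + 1)" for v
  have cprop: "c v \<subseteq> {i. i < N \<and> v @ [i] \<in> G} \<and> card (c v) = N - m + 1" if vG: "v \<in> G" for v
  proof -
    obtain C where "C \<subseteq> {i. i < N \<and> v @ [i] \<in> G}" "card C = N - m + 1"
      using key[OF vG] by (rule obtain_subset_with_card_n)
    then have "\<exists>C. C \<subseteq> {i. i < N \<and> v @ [i] \<in> G} \<and> card C = N - m + 1" by blast
    then show ?thesis unfolding c_def by (rule someI_ex)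
  qed
  have TG: "xs \<in> G" if "xs \<in> T c" for xs
    using that
  proof (induction rule: T.induct)
    case Nil then show ?case using nb unfolding G_def by blast
  next
    case (snoc xs i) then show ?case using cprop by blast
  qed
  have "regular (N - m + 1) (T c)"
  proof (rule T_regular, intro ballI conjI)
    fix v assume "v \<in> T c"
    then have "v \<in> G" by (rule TG)
    then show "finite (c v)" "card (c v) = N - m + 1"
      using cprop[of v] by (auto intro: finite_subset[of _ "{..<N}"])
  qed
  moreover have "is_subtree (T c) S"
    unfolding is_subtree_def using TG GS T_butlast T.Nil by blast
  ultimately show ?thesis by blast
qed

theorem proposition2p1:
  fixes N m :: nat and S :: "nat list set"
  assumes "is_subtree S (full_tree N)"
    and "1 \<le> m" and "m \<le> N"
    and "\<forall>R. is_subtree R (full_tree N) \<and> regular m R \<longrightarrow> infinite (S \<inter> R)"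
  shows "\<exists>R'. is_subtree R' S \<and> regular (N - m + 1) R'"
proof (cases "\<exists>r. [] \<in> Bs S N m r")
  case True
  then obtain r where "[] \<in> Bs S N m r" by blast
  from bad_case[OF assms(1) assms(3) this] assms(4) show ?thesis by blast
next
  case False
  then show ?thesis using good_case[OF assms(1-3)] by blast
qed

end
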